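(* Let $E$ be a Banach lattice whose dual $E'$ does not contain any (isomorphic) copy of $\ell_1$. Then $E$ has the weak Grothendieck property.
   Context: $E$ has the weak Grothendieck property if every disjoint weak* null sequence in the dual Banach lattice $E'$ is weakly null. *)

theory Defs
  imports "HOL-Analysis.Analysis"
begin

definition lat_abs :: "'a::{ordered_real_vector, lattice} \<Rightarrow> 'a" where
  "lat_abs x = sup x (- x)"

definition banach_lattice :: "'a::{banach, ordered_real_vector, lattice} itself \<Rightarrow> bool" where
  "banach_lattice _ \<longleftrightarrow> (\<forall>x y::'a. lat_abs x \<le> lat_abs y \<longrightarrow> norm x \<le> norm y)"

text \<open>Its lattice operations are given by the Riesz-Kantorovich formulas:
for x \<ge> 0, |f|(x) = sup { f y : |y| \<le> x } and
(f \<and> g)(x) = inf { f y + g (x - y) : 0 \<le> y \<le> x }.\<close>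

definition dual_abs :: "('a::{banach, ordered_real_vector, lattice} \<Rightarrow>\<^sub>L real) \<Rightarrow> 'a \<Rightarrow> real" where
  "dual_abs f x = Sup {blinfun_apply f y | y. lat_abs y \<le> x}"

definition dual_disjoint ::
  "('a::{banach, ordered_real_vector, lattice} \<Rightarrow>\<^sub>L real) \<Rightarrow> ('a \<Rightarrow>\<^sub>L real) \<Rightarrow> bool" where
  "dual_disjoint f g \<longleftrightarrow>
     (\<forall>x::'a. 0 \<le> x \<longrightarrow> Inf {dual_abs f y + dual_abs g (x - y) | y. 0 \<le> y \<and> y \<le> x} = 0)"

definition disjoint_seq_dual :: "(nat \<Rightarrow> ('a::{banach, ordered_real_vector, lattice} \<Rightarrow>\<^sub>L real)) \<Rightarrow> bool" where
  "disjoint_seq_dual f \<longleftrightarrow> (\<forall>m n. m \<noteq> n \<longrightarrow> dual_disjoint (f m) (f n))"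

definition weak_star_null :: "(nat \<Rightarrow> ('a::real_normed_vector \<Rightarrow>\<^sub>L real)) \<Rightarrow> bool" where
  "weak_star_null f \<longleftrightarrow> (\<forall>x. (\<lambda>n. blinfun_apply (f n) x) \<longlonglongrightarrow> 0)"

definition weakly_null :: "(nat \<Rightarrow> 'b::real_normed_vector) \<Rightarrow> bool" where
  "weakly_null f \<longleftrightarrow> (\<forall>\<phi> :: 'b \<Rightarrow>\<^sub>L real. (\<lambda>n. blinfun_apply \<phi> (f n)) \<longlonglongrightarrow> 0)"

definition weak_grothendieck :: "'a::{banach, ordered_real_vector, lattice} itself \<Rightarrow> bool" where
  "weak_grothendieck _ \<longleftrightarrow>
     (\<forall>f :: nat \<Rightarrow> ('a \<Rightarrow>\<^sub>L real). disjoint_seq_dual f \<and> weak_star_null f \<longrightarrow> weakly_null f)"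

definition l1 :: "(nat \<Rightarrow> real) set" where
  "l1 = {a. summable (\<lambda>n. \<bar>a n\<bar>)}"

definition l1_norm :: "(nat \<Rightarrow> real) \<Rightarrow> real" where
  "l1_norm a = (\<Sum>n. \<bar>a n\<bar>)"

definition contains_l1 :: "'b::real_normed_vector itself \<Rightarrow> bool" where
  "contains_l1 _ \<longleftrightarrow>
     (\<exists>(T :: (nat \<Rightarrow> real) \<Rightarrow> 'b) c C. 0 < c \<and> 0 < C \<and>
        (\<forall>a\<in>l1. \<forall>b\<in>l1. T (\<lambda>n. a n + b n) = T a + T b) \<and>
        (\<forall>a\<in>l1. \<forall>r. T (\<lambda>n. r * a n) = r *\<^sub>R T a) \<and>
        (\<forall>a\<in>l1. c * l1_norm a \<le> norm (T a) \<and> norm (T a) \<le> C * l1_norm a))"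

end

theory Submission
  imports Defs "HOL-Library.Infinite_Set"
begin


lemma lat_abs_ge: "(x::'a::{ordered_real_vector, lattice}) \<le> lat_abs x" "- x \<le> lat_abs x"
  by (auto simp: lat_abs_def)

lemma lat_abs_le_iff: "lat_abs (x::'a::{ordered_real_vector, lattice}) \<le> y \<longleftrightarrow> x \<le> y \<and> - x \<le> y"
  by (auto simp: lat_abs_def)

lemma lat_abs_minus: "lat_abs (- (x::'a::{ordered_real_vector, lattice})) = lat_abs x"
  by (simp add: lat_abs_def sup_commute)

lemma lat_abs_pos: "0 \<le> (y::'a::{ordered_real_vector, lattice}) \<Longrightarrow> lat_abs y = y"
  unfolding lat_abs_def by (rule sup_absorb1) (meson neg_le_0_iff_le order.trans)

lemma lat_abs_zero: "lat_abs (x::'a::{ordered_real_vector, lattice}) \<le> 0 \<Longrightarrow> x = 0"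
  unfolding lat_abs_le_iff by (simp add: order.antisym)

lemma lat_abs_triangle: "lat_abs ((x::'a::{ordered_real_vector, lattice}) + y) \<le> lat_abs x + lat_abs y"
  unfolding lat_abs_le_iff using lat_abs_ge[of x] lat_abs_ge[of y]
  by (metis add_mono diff_conv_add_uminus minus_add_distrib)

lemma riesz_decomp:
  fixes x a b :: "'a::{ordered_real_vector, lattice}"
  assumes "0 \<le> a" "0 \<le> b" "lat_abs x \<le> a + b"
  shows "\<exists>x1 x2. x = x1 + x2 \<and> lat_abs x1 \<le> a \<and> lat_abs x2 \<le> b"
proof -
  define x1 where "x1 = sup (inf x a) (- a)"
  have xa: "x \<le> a + b" "- x \<le> a + b" using assms(3) by (auto simp: lat_abs_le_iff)
  have "x1 \<le> a" unfolding x1_def using assms(1)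
    by (meson inf_le2 le_supI neg_le_0_iff_le order.trans)
  moreover have "- x1 \<le> a" unfolding x1_def
    by (simp add: minus_le_iff)
  moreover have "x - x1 \<le> b"
  proof -
    have "x - b \<le> inf x a" using xa assms(2)
      by (simp add: diff_le_eq add.commute)
    also have "\<dots> \<le> x1" unfolding x1_def by simp
    finally show ?thesis by (simp add: diff_le_eq add.commute)
  qed
  moreover have "- (x - x1) \<le> b"
  proof -
    have "inf x a \<le> x + b" using assms(2)
      by (meson add_increasing2 inf_le1 order.refl order.trans)
    moreover have "- a \<le> x + b" using xa
      by (metis add.commute minus_le_iff diff_le_eq diff_minus_eq_add minus_diff_eq)
    ultimately have "x1 \<le> x + b" unfolding x1_def by simp
    then show ?thesis by (simp add: algebra_simps)
  qed
  ultimately show ?thesis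
    by (intro exI[of _ x1] exI[of _ "x - x1"]) (auto simp: lat_abs_le_iff)
qed

definition small :: "('a::{banach, ordered_real_vector, lattice} \<Rightarrow>\<^sub>L real) \<Rightarrow> 'a \<Rightarrow> real \<Rightarrow> bool" where
  "small f y d \<longleftrightarrow> (\<forall>z. lat_abs z \<le> y \<longrightarrow> \<bar>f z\<bar> \<le> d)"

definition sdisj :: "('a::{banach, ordered_real_vector, lattice} \<Rightarrow>\<^sub>L real) \<Rightarrow> ('a \<Rightarrow>\<^sub>L real) \<Rightarrow> bool" where
  "sdisj f g \<longleftrightarrow> (\<forall>x. 0 \<le> x \<longrightarrow> (\<forall>d>0. \<exists>y. 0 \<le> y \<and> y \<le> x \<and> small f y d \<and> small g (x - y) d))"

lemma small_mono: "small f y d \<Longrightarrow> y' \<le> y \<Longrightarrow> d \<le> d' \<Longrightarrow> small f y' d'"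
  unfolding small_def by (meson order.trans)

lemma small_add: "small f y d1 \<Longrightarrow> small g y d2 \<Longrightarrow> small (f + g) y (d1 + d2)"
  unfolding small_def by (simp add: plus_blinfun.rep_eq) (meson abs_triangle_ineq add_mono order.trans)

lemma small_scale: "small f y d \<Longrightarrow> small (r *\<^sub>R f) y (\<bar>r\<bar> * d)"
  unfolding small_def by (simp add: scaleR_blinfun.rep_eq abs_mult mult_left_mono)

lemma small_sup:
  assumes "0 \<le> y1" "0 \<le> y2" "small f y1 d1" "small f y2 d2"
  shows "small f (sup y1 y2) (d1 + d2)"
  unfolding small_def
proof (intro allI impI)
  fix z assume z: "lat_abs z \<le> sup y1 y2"
  have "sup y1 y2 \<le> y1 + y2" using assms(1,2)
    by (simp add: add_increasing add_increasing2)
  with z have "lat_abs z \<le> y1 + y2" by (rule order.trans)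
  then obtain z1 z2 where "z = z1 + z2" "lat_abs z1 \<le> y1" "lat_abs z2 \<le> y2"
    using riesz_decomp[OF assms(1,2)] by blast
  then have "\<bar>f z1\<bar> \<le> d1" "\<bar>f z2\<bar> \<le> d2" using assms(3,4) by (auto simp: small_def)
  then show "\<bar>f z\<bar> \<le> d1 + d2" using \<open>z = z1 + z2\<close>
    by (simp add: blinfun.add_right)
qed

lemma sdisj_sym: "sdisj f g \<Longrightarrow> sdisj g f"
  unfolding sdisj_def
proof (intro allI impI)
  fix x :: 'a and d :: real
  assume H: "\<forall>x\<ge>0. \<forall>d>0. \<exists>y\<ge>0. y \<le> x \<and> small f y d \<and> small g (x - y) d" "0 \<le> x" "0 < d"
  then obtain y where "0 \<le> y" "y \<le> x" "small f y d" "small g (x - y) d" by blast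
  then show "\<exists>y\<ge>0. y \<le> x \<and> small g y d \<and> small f (x - y) d"
    by (intro exI[of _ "x - y"]) auto
qed

lemma sdisj_zero: "sdisj f 0"
  unfolding sdisj_def small_def
  by (metis abs_zero blinfun.zero_left blinfun.zero_right diff_zero lat_abs_zero order.refl less_imp_le)

lemma sdisj_scale:
  assumes "sdisj f g" shows "sdisj f (r *\<^sub>R g)"
  unfolding sdisj_def
proof (intro allI impI)
  fix x :: 'a and d :: real
  assume "0 \<le> x" "0 < d"
  define d' where "d' = d / (\<bar>r\<bar> + 1)"
  have d': "0 < d'" "\<bar>r\<bar> * d' \<le> d" "d' \<le> d"
    using \<open>0 < d\<close> by (auto simp: d'_def field_simps)
  obtain y where "0 \<le> y" "y \<le> x" "small f y d'" "small g (x - y) d'"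
    using assms \<open>0 \<le> x\<close> d'(1) unfolding sdisj_def by blast
  then show "\<exists>y\<ge>0. y \<le> x \<and> small f y d \<and> small (r *\<^sub>R g) (x - y) d"
  proof (intro exI[of _ y] conjI)
    show "small f y d" using \<open>small f y d'\<close> _ \<open>d' \<le> d\<close> by (rule small_mono) simp
    show "small (r *\<^sub>R g) (x - y) d" using small_scale[OF \<open>small g (x - y) d'\<close>, of r] _ d'(2)
      by (rule small_mono) simp
  qed auto
qed

lemma sdisj_add:
  assumes "sdisj f g" "sdisj f h" shows "sdisj f (g + h)"
  unfolding sdisj_def
proof (intro allI impI)
  fix x :: 'a and d :: real
  assume "0 \<le> x" "0 < d"
  obtain y1 where y1: "0 \<le> y1" "y1 \<le> x" "small f y1 (d/2)" "small g (x - y1) (d/2)"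
    using assms(1) \<open>0 \<le> x\<close> \<open>0 < d\<close> unfolding sdisj_def by (meson half_gt_zero)
  obtain y2 where y2: "0 \<le> y2" "y2 \<le> x" "small f y2 (d/2)" "small h (x - y2) (d/2)"
    using assms(2) \<open>0 \<le> x\<close> \<open>0 < d\<close> unfolding sdisj_def by (meson half_gt_zero)
  have "small f (sup y1 y2) d" using small_sup[OF y1(1) y2(1) y1(3) y2(3)] by simp
  moreover have "small g (x - sup y1 y2) (d/2)"
    using y1(4) by (rule small_mono) (auto simp: diff_le_eq)
  moreover have "small h (x - sup y1 y2) (d/2)"
    using y2(4) by (rule small_mono) (auto simp: diff_le_eq)
  ultimately show "\<exists>y\<ge>0. y \<le> x \<and> small f y d \<and> small (g + h) (x - y) d"
    using y1 y2 by (intro exI[of _ "sup y1 y2"]) (auto dest: small_add intro: le_supI1 simp del: field_sum_of_halves)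
qed

lemma sdisj_sum:
  assumes "finite A" "\<And>n. n \<in> A \<Longrightarrow> sdisj f (g n)"
  shows "sdisj f (\<Sum>n\<in>A. c n *\<^sub>R g n)"
  using assms
proof (induction A rule: finite_induct)
  case empty
  then show ?case by (simp add: sdisj_zero)
next
  case (insert a A)
  then have "sdisj f (c a *\<^sub>R g a + (\<Sum>n\<in>A. c n *\<^sub>R g n))"
    by (intro sdisj_add sdisj_scale) auto
  then show ?case using insert.hyps by simp
qed

lemma sdisj_sums:
  assumes "finite A" "finite B" "A \<inter> B = {}" "\<And>m n. m \<noteq> n \<Longrightarrow> sdisj (g m) (g n)"
  shows "sdisj (\<Sum>n\<in>A. c n *\<^sub>R g n) (\<Sum>n\<in>B. d n *\<^sub>R g n)"
  using assms(1,3)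
proof (induction A rule: finite_induct)
  case empty
  then show ?case by (simp add: sdisj_zero[THEN sdisj_sym])
next
  case (insert a A)
  have "sdisj (g a) (\<Sum>n\<in>B. d n *\<^sub>R g n)"
  proof (rule sdisj_sum[OF assms(2)])
    fix n assume "n \<in> B"
    then have "a \<noteq> n" using insert.prems by auto
    then show "sdisj (g a) (g n)" by (rule assms(4))
  qed
  then have "sdisj (\<Sum>n\<in>B. d n *\<^sub>R g n) (c a *\<^sub>R g a)"
    by (rule sdisj_scale[OF sdisj_sym])
  moreover have "sdisj (\<Sum>n\<in>B. d n *\<^sub>R g n) (\<Sum>n\<in>A. c n *\<^sub>R g n)"
    by (rule sdisj_sym) (use insert in simp)
  ultimately have "sdisj (\<Sum>n\<in>B. d n *\<^sub>R g n) (c a *\<^sub>R g a + (\<Sum>n\<in>A. c n *\<^sub>R g n))"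
    by (rule sdisj_add)
  then show ?case using insert.hyps
    by (simp add: sum.insert) (rule sdisj_sym)
qed

lemma lat_abs_nonneg: "0 \<le> lat_abs (x::'a::{ordered_real_vector, lattice})"
proof -
  let ?a = "lat_abs x"
  have "x + - x \<le> ?a + ?a" using lat_abs_ge[of x] by (rule add_mono)
  then have "0 \<le> ?a + ?a" by simp
  then have "0 \<le> (1/2::real) *\<^sub>R (?a + ?a)" by (intro scaleR_nonneg_nonneg) simp_all
  also have "(1/2::real) *\<^sub>R (?a + ?a) = ((1/2::real) + 1/2) *\<^sub>R ?a"
    by (simp only: scaleR_add_right scaleR_add_left)
  also have "\<dots> = ?a" by simp
  finally show ?thesis .
qed

lemma BL_norm_le:
  assumes "banach_lattice TYPE('a::{banach, ordered_real_vector, lattice})"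
    and "lat_abs (z::'a) \<le> lat_abs w"
  shows "norm z \<le> norm w"
  using assms unfolding banach_lattice_def by blast

lemma dual_abs_upper:
  assumes BL: "banach_lattice TYPE('a::{banach, ordered_real_vector, lattice})"
    and y: "0 \<le> (y::'a)" and z: "lat_abs z \<le> y"
  shows "\<bar>blinfun_apply f z\<bar> \<le> dual_abs f y"
proof -
  let ?S = "{blinfun_apply f w | w. lat_abs w \<le> y}"
  have bdd: "bdd_above ?S"
  proof (rule bdd_aboveI)
    fix t assume "t \<in> ?S"
    then obtain w where w: "t = f w" "lat_abs w \<le> y" by blast
    have "norm w \<le> norm y" using BL_norm_le[OF BL] w(2) lat_abs_pos[OF y] by simp
    then have "\<bar>f w\<bar> \<le> norm f * norm y"
      by (metis norm_blinfun real_norm_def order.trans mult_left_mono norm_ge_zero)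
    then show "t \<le> norm f * norm y" using w by simp
  qed
  have "f z \<in> ?S" using z by blast
  moreover have "- f z \<in> ?S" using z lat_abs_minus[of z]
    by (metis (mono_tags, lifting) blinfun.minus_right mem_Collect_eq)
  ultimately show ?thesis using bdd unfolding dual_abs_def
    by (metis (no_types, lifting) abs_le_iff cSup_upper)
qed

lemma dual_abs_nonneg:
  assumes BL: "banach_lattice TYPE('a::{banach, ordered_real_vector, lattice})"
    and y: "0 \<le> (y::'a)"
  shows "0 \<le> dual_abs f y"
proof -
  have "lat_abs (0::'a) \<le> y" using lat_abs_pos[of "0::'a"] y by simp
  from dual_abs_upper[OF BL y this, of f] show ?thesis by simp
qed

lemma dual_disjoint_sdisj:
  assumes BL: "banach_lattice TYPE('a::{banach, ordered_real_vector, lattice})"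
    and D: "dual_disjoint f (g :: 'a \<Rightarrow>\<^sub>L real)"
  shows "sdisj f g"
  unfolding sdisj_def
proof (intro allI impI)
  fix x :: 'a and d :: real
  assume x: "0 \<le> x" and d: "0 < d"
  let ?I = "{dual_abs f y + dual_abs g (x - y) | y. 0 \<le> y \<and> y \<le> x}"
  have "dual_abs f 0 + dual_abs g (x - 0) \<in> ?I" by (rule CollectI, rule exI[of _ 0]) (use x in simp)
  then have "?I \<noteq> {}" by blast
  moreover have "bdd_below ?I"
  proof (rule bdd_belowI)
    fix t assume "t \<in> ?I"
    then obtain y where "t = dual_abs f y + dual_abs g (x - y)" "0 \<le> y" "y \<le> x" by blast
    then show "0 \<le> t" using dual_abs_nonneg[OF BL] by (simp add: add_nonneg_nonneg)
  qed
  moreover have "Inf ?I = 0" using D x unfolding dual_disjoint_def by (elim allE impE) auto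
  ultimately have "\<exists>t\<in>?I. t < d" using cInf_less_iff[of ?I d] d by auto
  then obtain t where "t \<in> ?I" "t < d" by (elim bexE)
  then obtain y where y: "dual_abs f y + dual_abs g (x - y) < d" "0 \<le> y" "y \<le> x" by blast
  have xy: "0 \<le> x - y" using y by simp
  have "dual_abs f y < d" "dual_abs g (x - y) < d"
    using y(1) dual_abs_nonneg[OF BL y(2), of f] dual_abs_nonneg[OF BL xy, of g] by linarith+
  then have "small f y d" "small g (x - y) d"
    unfolding small_def
  proof (safe)
    fix z assume "lat_abs z \<le> y" "dual_abs f y < d"
    with dual_abs_upper[OF BL y(2) this(1), of f] show "\<bar>f z\<bar> \<le> d" by linarith
  next
    fix z assume "lat_abs z \<le> x - y" "dual_abs g (x - y) < d"
    with dual_abs_upper[OF BL xy this(1), of g] show "\<bar>g z\<bar> \<le> d" by linarith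
  qed
  then show "\<exists>y\<ge>0. y \<le> x \<and> small f y d \<and> small g (x - y) d" using y by blast
qed

lemma sdisj_norm:
  assumes BL: "banach_lattice TYPE('a::{banach, ordered_real_vector, lattice})"
    and D: "sdisj P (N :: 'a \<Rightarrow>\<^sub>L real)"
  shows "norm (P + N) \<le> norm (P - N)"
proof -
  have main: "(P + N) x \<le> norm (P - N) * norm x" for x
  proof (rule field_le_epsilon)
    fix e :: real assume e: "0 < e"
    define u where "u = lat_abs x"
    have u: "0 \<le> u" unfolding u_def by (rule lat_abs_nonneg)
    obtain y where y: "0 \<le> y" "y \<le> u" "small P y (e/4)" "small N (u - y) (e/4)"
      using D u e unfolding sdisj_def by (meson divide_pos_pos zero_less_numeral)
    have uy: "0 \<le> u - y" using y by simp
    have "lat_abs x \<le> y + (u - y)" by (simp add: u_def)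
    then obtain x1 x2 where x12: "x = x1 + x2" "lat_abs x1 \<le> y" "lat_abs x2 \<le> u - y"
      using riesz_decomp[OF y(1) uy] by blast
    have b1: "\<bar>P x1\<bar> \<le> e/4" "\<bar>N x2\<bar> \<le> e/4" using x12 y unfolding small_def by auto
    have "lat_abs (x2 - x1) \<le> lat_abs x2 + lat_abs (- x1)"
      using lat_abs_triangle[of x2 "- x1"] by simp
    also have "\<dots> \<le> (u - y) + y" using add_mono[OF x12(3) x12(2)] lat_abs_minus[of x1] by simp
    finally have "lat_abs (x2 - x1) \<le> lat_abs x" by (simp add: u_def)
    then have nx: "norm (x2 - x1) \<le> norm x" by (rule BL_norm_le[OF BL])
    have "(P - N) (x2 - x1) \<le> norm (P - N) * norm (x2 - x1)"
      by (metis abs_le_D1 norm_blinfun real_norm_def)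
    also have "\<dots> \<le> norm (P - N) * norm x" using nx by (simp add: mult_left_mono)
    finally have A: "(P - N) (x2 - x1) \<le> norm (P - N) * norm x" .
    have "(P + N) x = (P - N) (x2 - x1) + 2 * P x1 + 2 * N x2"
      using x12(1) by (simp add: plus_blinfun.rep_eq minus_blinfun.rep_eq blinfun.add_right blinfun.diff_right)
    then show "(P + N) x \<le> norm (P - N) * norm x + e"
      using A b1 by linarith
  qed
  show ?thesis
  proof (rule norm_blinfun_bound)
    show "0 \<le> norm (P - N)" by simp
    fix x
    have "(P + N) x \<le> norm (P - N) * norm x" by (rule main)
    moreover have "- (P + N) x \<le> norm (P - N) * norm x"
      using main[of "- x"] by (simp add: blinfun.minus_right)
    ultimately show "norm ((P + N) x) \<le> norm (P - N) * norm x" by simp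
  qed
qed

lemma ubp:
  fixes f :: "nat \<Rightarrow> ('a::banach \<Rightarrow>\<^sub>L real)"
  assumes bnd: "\<And>x. \<exists>M. \<forall>n. \<bar>f n x\<bar> \<le> M"
  shows "\<exists>B>0. \<forall>n. norm (f n) \<le> B"
proof -
  define F where "F k = (\<Inter>n. {x. \<bar>f n x\<bar> \<le> real k})" for k :: nat
  have ct: "continuous_on UNIV (\<lambda>x. \<bar>blinfun_apply (f n) x\<bar>)" for n
    by (rule continuous_on_rabs, rule linear_continuous_on, rule blinfun.bounded_linear_right)
  have cl: "closed (F k)" for k
    unfolding F_def
    by (intro closed_INT ballI closed_Collect_le[OF ct continuous_on_const])
  have cov: "\<Union>(range F) = UNIV"
  proof safe
    fix x :: 'a
    obtain M where M: "\<forall>n. \<bar>f n x\<bar> \<le> M" using bnd by blast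
    have "M \<le> real (nat \<lceil>M\<rceil>)" by linarith
    then have "x \<in> F (nat \<lceil>M\<rceil>)" using M unfolding F_def by (auto intro: order.trans)
    then show "x \<in> \<Union>(range F)" by blast
  qed auto
  have "\<exists>k. interior (F k) \<noteq> {}"
  proof (rule ccontr)
    assume "\<not> ?thesis"
    then have "\<And>T. T \<in> range F \<Longrightarrow> closedin euclidean T \<and> euclidean interior_of T = {}"
      using cl by auto
    then have "euclidean interior_of \<Union>(range F) = {}"
      by (intro Baire_category_alt) (auto simp: completely_metrizable_space_euclidean)
    then show False using cov by simp
  qed
  then obtain k x0 where "x0 \<in> interior (F k)" by blast
  then obtain e where e: "0 < e" "ball x0 e \<subseteq> F k" using mem_interior by blast
  have small: "\<bar>f n z\<bar> \<le> 2 * real k" if "norm z < e" for n z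
  proof -
    have "x0 + z \<in> ball x0 e" "x0 \<in> ball x0 e" using that e by (auto simp: dist_norm)
    then have "x0 + z \<in> F k" "x0 \<in> F k" using e by auto
    then have "\<bar>f n (x0 + z)\<bar> \<le> real k" "\<bar>f n x0\<bar> \<le> real k" unfolding F_def by auto
    moreover have "f n z = f n (x0 + z) - f n x0" by (simp add: blinfun.add_right)
    ultimately show ?thesis by linarith
  qed
  define B where "B = 4 * real k / e + 1"
  have B: "0 < B" unfolding B_def using e by (simp add: add_nonneg_pos)
  have "norm (f n) \<le> B" for n
  proof (rule norm_blinfun_bound)
    show "0 \<le> B" using B by simp
    fix x :: 'a
    show "norm (f n x) \<le> B * norm x"
    proof (cases "x = 0")
      case True then show ?thesis by simp
    next
      case False
      then have nx: "0 < norm x" by simp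
      define z where "z = (e / (2 * norm x)) *\<^sub>R x"
      have "norm z = e / 2" using nx e by (simp add: z_def)
      then have "norm z < e" using e by simp
      then have fz: "\<bar>f n z\<bar> \<le> 2 * real k" by (rule small)
      have xeq: "(2 * norm x / e) *\<^sub>R z = x" using nx e by (simp add: z_def)
      have "f n x = (2 * norm x / e) * f n z"
        using blinfun.scaleR_right[of "f n" "2 * norm x / e" z] unfolding xeq by simp
      then have "\<bar>f n x\<bar> = (2 * norm x / e) * \<bar>f n z\<bar>" using nx e by (simp add: abs_mult)
      also have "\<dots> \<le> (2 * norm x / e) * (2 * real k)" using fz nx e by (intro mult_left_mono) auto
      also have "\<dots> = (4 * real k / e) * norm x" by (simp add: field_simps)
      also have "\<dots> \<le> B * norm x" unfolding B_def using nx by (simp add: distrib_right)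
      finally show ?thesis by simp
    qed
  qed
  then show ?thesis using B by blast
qed

lemma finite_lower:
  fixes h :: "nat \<Rightarrow> ('a::{banach, ordered_real_vector, lattice} \<Rightarrow>\<^sub>L real)"
    and \<phi> :: "('a \<Rightarrow>\<^sub>L real) \<Rightarrow>\<^sub>L real"
  assumes BL: "banach_lattice TYPE('a)"
    and hdis: "\<And>m n. m \<noteq> n \<Longrightarrow> sdisj (h m) (h n)"
    and phi: "\<And>n. \<epsilon> \<le> \<phi> (h n)"
    and np: "0 < norm \<phi>"
  shows "\<epsilon> / norm \<phi> * (\<Sum>n<K. \<bar>a n\<bar>) \<le> norm (\<Sum>n<K. a n *\<^sub>R h n)"
proof -
  define A where "A = {n\<in>{..<K}. 0 \<le> a n}"
  define Bs where "Bs = {n\<in>{..<K}. a n < 0}"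
  have U: "{..<K} = A \<union> Bs" "A \<inter> Bs = {}" "finite A" "finite Bs"
    by (auto simp: A_def Bs_def)
  have split: "sum g {..<K} = sum g A + sum g Bs" for g :: "nat \<Rightarrow> ('a \<Rightarrow>\<^sub>L real)"
    using U by (simp add: sum.union_disjoint)
  define P where "P = (\<Sum>n\<in>A. a n *\<^sub>R h n)"
  define N where "N = (\<Sum>n\<in>Bs. (- a n) *\<^sub>R h n)"
  have "(\<Sum>n<K. a n *\<^sub>R h n) = P + (\<Sum>n\<in>Bs. a n *\<^sub>R h n)"
    unfolding P_def by (rule split)
  also have "(\<Sum>n\<in>Bs. a n *\<^sub>R h n) = - N"
    unfolding N_def by (simp add: sum_negf[symmetric])
  finally have S1: "(\<Sum>n<K. a n *\<^sub>R h n) = P - N" by simp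
  have "(\<Sum>n<K. \<bar>a n\<bar> *\<^sub>R h n) = (\<Sum>n\<in>A. \<bar>a n\<bar> *\<^sub>R h n) + (\<Sum>n\<in>Bs. \<bar>a n\<bar> *\<^sub>R h n)"
    by (rule split)
  also have "(\<Sum>n\<in>A. \<bar>a n\<bar> *\<^sub>R h n) = P"
    unfolding P_def by (rule sum.cong) (auto simp: A_def)
  also have "(\<Sum>n\<in>Bs. \<bar>a n\<bar> *\<^sub>R h n) = N"
    unfolding N_def by (rule sum.cong) (auto simp: Bs_def)
  finally have S2: "(\<Sum>n<K. \<bar>a n\<bar> *\<^sub>R h n) = P + N" .
  have "sdisj P N" unfolding P_def N_def
    by (rule sdisj_sums[OF U(3,4,2) hdis])
  then have nPN: "norm (P + N) \<le> norm (\<Sum>n<K. a n *\<^sub>R h n)"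
    using sdisj_norm[OF BL] S1 by simp
  have "\<epsilon> * (\<Sum>n<K. \<bar>a n\<bar>) = (\<Sum>n<K. \<bar>a n\<bar> * \<epsilon>)"
    by (simp add: sum_distrib_left mult.commute)
  also have "\<dots> \<le> (\<Sum>n<K. \<bar>a n\<bar> * \<phi> (h n))"
    by (rule sum_mono) (simp add: mult_left_mono phi)
  also have "\<dots> = \<phi> (P + N)"
    unfolding S2[symmetric] by (simp add: blinfun.sum_right blinfun.scaleR_right)
  also have "\<dots> \<le> norm \<phi> * norm (P + N)"
    by (metis abs_le_D1 norm_blinfun real_norm_def)
  also have "\<dots> \<le> norm \<phi> * norm (\<Sum>n<K. a n *\<^sub>R h n)"
    using nPN by (simp add: mult_left_mono)
  finally have "\<epsilon> * (\<Sum>n<K. \<bar>a n\<bar>) \<le> norm \<phi> * norm (\<Sum>n<K. a n *\<^sub>R h n)" .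
  then show ?thesis using np
    by (simp add: field_simps)
qed

theorem mainTheorem8:
  assumes "banach_lattice TYPE('a::{banach, ordered_real_vector, lattice})"
    and "\<not> contains_l1 TYPE('a \<Rightarrow>\<^sub>L real)"
  shows "weak_grothendieck TYPE('a)"
  unfolding weak_grothendieck_def
proof (rule allI, rule impI)
  note BL = assms(1)
  fix f :: "nat \<Rightarrow> ('a \<Rightarrow>\<^sub>L real)"
  assume "disjoint_seq_dual f \<and> weak_star_null f"
  then have dis: "\<And>m n. m \<noteq> n \<Longrightarrow> dual_disjoint (f m) (f n)"
    and ws: "\<And>x. (\<lambda>n. f n x) \<longlonglongrightarrow> 0"
    unfolding disjoint_seq_dual_def weak_star_null_def by auto
  have "\<exists>B>0. \<forall>n. norm (f n) \<le> B"
  proof (rule ubp)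
    fix x
    have "Bseq (\<lambda>n. f n x)" using ws[of x] by (intro convergent_imp_Bseq convergentI)
    then show "\<exists>M. \<forall>n. \<bar>f n x\<bar> \<le> M" unfolding Bseq_def by auto
  qed
  then obtain B where B: "0 < B" "\<And>n. norm (f n) \<le> B" by blast
  show "weakly_null f"
    unfolding weakly_null_def
  proof (rule allI, rule ccontr)
    fix \<phi> :: "('a \<Rightarrow>\<^sub>L real) \<Rightarrow>\<^sub>L real"
    assume "\<not> (\<lambda>n. \<phi> (f n)) \<longlonglongrightarrow> 0"
    then obtain \<epsilon> where eps: "0 < \<epsilon>" "\<And>no. \<exists>n\<ge>no. \<epsilon> \<le> \<bar>\<phi> (f n)\<bar>"
      unfolding LIMSEQ_iff by (auto simp: not_less)
    have "infinite {n. \<epsilon> \<le> \<bar>\<phi> (f n)\<bar>}"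
      unfolding infinite_nat_iff_unbounded_le using eps(2) by auto
    then obtain r :: "nat \<Rightarrow> nat" where r: "strict_mono r" "\<And>n. \<epsilon> \<le> \<bar>\<phi> (f (r n))\<bar>"
      using infinite_enumerate by blast
    define s where "s n = (if 0 \<le> \<phi> (f (r n)) then 1 else - 1 :: real)" for n
    define h where "h n = s n *\<^sub>R f (r n)" for n
    have s_abs: "\<bar>s n\<bar> = 1" for n by (simp add: s_def)
    have phi: "\<epsilon> \<le> \<phi> (h n)" for n
      using r(2)[of n] by (auto simp: h_def s_def blinfun.scaleR_right abs_if split: if_splits)
    have hB: "norm (h n) \<le> B" for n
      using B(2)[of "r n"] by (simp add: h_def s_abs)
    have hdis: "sdisj (h m) (h n)" if "m \<noteq> n" for m n
    proof -
      have "r m \<noteq> r n" using that strict_mono_eq[OF r(1)] by auto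
      then have "sdisj (f (r m)) (f (r n))" by (rule dual_disjoint_sdisj[OF BL dis])
      then have "sdisj (f (r m)) (h n)" unfolding h_def by (rule sdisj_scale)
      then have "sdisj (h n) (h m)" unfolding h_def[of m] by (rule sdisj_scale[OF sdisj_sym])
      then show ?thesis by (rule sdisj_sym)
    qed
    have np: "0 < norm \<phi>"
    proof (rule ccontr)
      assume "\<not> 0 < norm \<phi>"
      then have "norm \<phi> = 0" by simp
      then have "\<phi> (h 0) = 0" by simp
      then show False using phi[of 0] eps(1) by simp
    qed
    define T where "T a = (\<Sum>n. a n *\<^sub>R h n)" for a :: "nat \<Rightarrow> real"
    have sn: "summable (\<lambda>n. norm (a n *\<^sub>R h n))" if "a \<in> l1" for a
    proof (rule summable_comparison_test)
      show "\<exists>N. \<forall>n\<ge>N. norm (norm (a n *\<^sub>R h n)) \<le> \<bar>a n\<bar> * B"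
        using hB by (auto intro!: mult_left_mono)
      show "summable (\<lambda>n. \<bar>a n\<bar> * B)" using that unfolding l1_def by (auto intro: summable_mult2)
    qed
    have sm: "summable (\<lambda>n. a n *\<^sub>R h n)" if "a \<in> l1" for a
      using sn[OF that] by (rule summable_norm_cancel)
    have "contains_l1 TYPE('a \<Rightarrow>\<^sub>L real)"
      unfolding contains_l1_def
    proof (intro exI conjI ballI allI)
      show "0 < \<epsilon> / norm \<phi>" using eps np by simp
      show "0 < B" by (rule B)
      fix a assume a: "a \<in> l1"
      then have al: "summable (\<lambda>n. \<bar>a n\<bar>)" unfolding l1_def by simp
      {
        fix b assume b: "b \<in> l1"
        have "T a + T b = (\<Sum>n. a n *\<^sub>R h n + b n *\<^sub>R h n)"
          unfolding T_def by (rule suminf_add[OF sm[OF a] sm[OF b]])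
        then show "T (\<lambda>n. a n + b n) = T a + T b"
          by (simp add: T_def scaleR_add_left)
      }
      {
        fix c :: real
        show "T (\<lambda>n. c * a n) = c *\<^sub>R T a"
          unfolding T_def using suminf_scaleR_right[OF sm[OF a], of c] by simp
      }
      have "norm (T a) \<le> (\<Sum>n. norm (a n *\<^sub>R h n))"
        unfolding T_def by (rule summable_norm[OF sn[OF a]])
      also have "\<dots> \<le> (\<Sum>n. \<bar>a n\<bar> * B)"
        using hB sn[OF a] al by (intro suminf_le) (auto intro!: mult_left_mono summable_mult2)
      also have "\<dots> = B * l1_norm a"
        unfolding l1_norm_def using suminf_mult2[OF al, of B] by (simp add: mult.commute)
      finally show "norm (T a) \<le> B * l1_norm a" .
      have L1: "(\<lambda>K. \<epsilon> / norm \<phi> * (\<Sum>n<K. \<bar>a n\<bar>)) \<longlonglongrightarrow> \<epsilon> / norm \<phi> * l1_norm a"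
        unfolding l1_norm_def by (intro tendsto_mult_left summable_LIMSEQ al)
      have L2: "(\<lambda>K. norm (\<Sum>n<K. a n *\<^sub>R h n)) \<longlonglongrightarrow> norm (T a)"
        unfolding T_def by (intro tendsto_norm summable_LIMSEQ sm a)
      show "\<epsilon> / norm \<phi> * l1_norm a \<le> norm (T a)"
        using L1 L2
      proof (rule LIMSEQ_le)
        show "\<exists>N. \<forall>K\<ge>N. \<epsilon> / norm \<phi> * (\<Sum>n<K. \<bar>a n\<bar>) \<le> norm (\<Sum>n<K. a n *\<^sub>R h n)"
          using finite_lower[where h=h and a=a, OF BL hdis phi np] by blast
      qed
    qed
    then show False using assms(2) by simp
  qed
qed

end
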